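(* Let $k_1,k_2$ be constants with $0<k_2\le 1$ and $8k_2^2+6k_1-3<0$. Let $J'=(z_w,z_w')$ be a nonempty open interval, let $r:J'\to\mathbb{R}$ be differentiable with $r(z)\neq 0$, $\dot r(z)<k_1$ and $|r(z)|<k_2$ for all $z\in J'$, and let $h:J'\to\mathbb{R}$ be differentiable with $\dot h(z)=1+h(z)^2-2r(z)h(z)$ on $J'$, having exactly one zero $z_*\in J'$. Let $G(z)=z-\dfrac{2h(z)}{2+h(z)^2-2r(z)h(z)}$. Then for every initial guess $z_0\in J'$ the iteration $z_{n+1}=G(z_n)$ is well defined and $(z_n)$ converges monotonically to $z_*$.
   Context: $\dot{}$ denotes differentiation with respect to $z$. "Converges monotonically" means all iterates lie in $J'$, the sequence is monotone, and its limit is $z_*$. *)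

theory Defs
  imports "HOL-Analysis.Analysis"
begin

end

theory Submission
  imports Defs
begin

theorem mainTheorem8:
  fixes k1 k2 zw zw' zs :: real
    and r r' h G :: "real \<Rightarrow> real"
  assumes k2_pos: "0 < k2" and k2_le: "k2 \<le> 1"
    and k_cond: "8 * k2^2 + 6 * k1 - 3 < 0"
    and J_ne: "zw < zw'"
    and r_deriv: "\<forall>z\<in>{zw<..<zw'}. (r has_real_derivative r' z) (at z)"
    and r_nz: "\<forall>z\<in>{zw<..<zw'}. r z \<noteq> 0"
    and r'_bound: "\<forall>z\<in>{zw<..<zw'}. r' z < k1"
    and r_bound: "\<forall>z\<in>{zw<..<zw'}. \<bar>r z\<bar> < k2"
    and h_deriv: "\<forall>z\<in>{zw<..<zw'}.
                    (h has_real_derivative (1 + (h z)^2 - 2 * r z * h z)) (at z)"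
    and zs_in: "zs \<in> {zw<..<zw'}" and h_zs: "h zs = 0"
    and zs_unique: "\<forall>z\<in>{zw<..<zw'}. h z = 0 \<longrightarrow> z = zs"
    and G_def: "G = (\<lambda>z. z - 2 * h z / (2 + (h z)^2 - 2 * r z * h z))"
  shows "\<forall>z0\<in>{zw<..<zw'}.
           (\<forall>n. (G ^^ n) z0 \<in> {zw<..<zw'} \<and>
                 2 + (h ((G ^^ n) z0))^2 - 2 * r ((G ^^ n) z0) * h ((G ^^ n) z0) \<noteq> 0)
         \<and> (mono (\<lambda>n. (G ^^ n) z0) \<or> antimono (\<lambda>n. (G ^^ n) z0))
         \<and> (\<lambda>n. (G ^^ n) z0) \<longlonglongrightarrow> zs"
proof -
  define J where "J = {zw<..<zw'}"
  define D where "D = (\<lambda>z. 1 + (h z)^2 - 2 * r z * h z)"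
  define D' where "D' = (\<lambda>z. 2 * h z * D z - 2 * (r' z * h z + r z * D z))"
  have G_eq: "G = (\<lambda>z. z - 2 * h z / (1 + D z))"
    unfolding G_def D_def by (auto simp: fun_eq_iff algebra_simps)
  have Dpos: "D z > 0" if "z \<in> J" for z
  proof -
    have "\<bar>r z\<bar> < 1" using r_bound that k2_le unfolding J_def by force
    hence "r z ^ 2 < 1" by (simp add: abs_square_less_1)
    moreover have "D z = (h z - r z)^2 + 1 - r z ^ 2" unfolding D_def by (simp add: power2_eq_square algebra_simps)
    moreover have "(h z - r z)^2 \<ge> 0" by simp
    ultimately show ?thesis by linarith
  qed
  have hD: "(h has_real_derivative D z) (at z)" if "z \<in> J" for z
    using h_deriv that unfolding J_def D_def by auto
  have rD: "(r has_real_derivative r' z) (at z)" if "z \<in> J" for z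
    using r_deriv that unfolding J_def by auto
  have DD: "(D has_real_derivative D' z) (at z)" if "z \<in> J" for z
  proof -
    have "((\<lambda>z. 1 + (h z)^2 - 2 * r z * h z) has_real_derivative
           (0 + of_nat 2 * (D z * h z ^ (2 - Suc 0)) - (2 * r' z * h z + D z * (2 * r z)))) (at z)"
      by (intro DERIV_diff DERIV_add DERIV_power DERIV_mult DERIV_cmult DERIV_const hD rD that) 
    then show ?thesis unfolding D'_def D_def[symmetric] by (simp add: algebra_simps)
  qed
  define G' where "G' = (\<lambda>z. 1 - (2 * D z * (1 + D z) - 2 * h z * D' z) / (1 + D z)^2)"
  have GD: "(G has_real_derivative G' z) (at z)" if "z \<in> J" for z
  proof -
    have ne: "1 + D z \<noteq> 0" using Dpos[OF that] by simp
    have "((\<lambda>z. z - 2 * h z / (1 + D z)) has_real_derivative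
          (1 - ((2 * D z) * (1 + D z) - (2 * h z) * (0 + D' z)) / ((1 + D z) * (1 + D z)))) (at z)"
      by (intro DERIV_diff DERIV_divide DERIV_add DERIV_cmult DERIV_const DERIV_ident hD DD that ne)
    then show ?thesis unfolding G'_def G_eq by (simp add: power2_eq_square)
  qed
  have G'nn: "G' z \<ge> 0" if "z \<in> J" for z
  proof -
    have dp: "1 + D z > 0" using Dpos[OF that] by simp
    define a where "a = h z"
    define Q where "Q = 3 * a^2 - 8 * r z * a + 4 * (r z)^2 + 2 - 4 * r' z"
    have rz: "\<bar>r z\<bar> < k2" "r' z < k1" using r_bound r'_bound that unfolding J_def by auto
    have "\<bar>r z\<bar>^2 < k2^2" using power_strict_mono[OF rz(1), of 2] by simp
    hence "(r z)^2 < k2^2" by simp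
    hence "3 * Q = (3*a - 4 * r z)^2 + 6 - 4 * (r z)^2 - 12 * r' z" unfolding Q_def by (simp add: power2_eq_square algebra_simps)
    hence Qpos: "Q \<ge> 0" using \<open>(r z)^2 < k2^2\<close> rz(2) k_cond k2_pos
    proof -
      have "(3*a - 4 * r z)^2 \<ge> 0" "k2^2 \<ge> 0" by simp_all
      thus ?thesis using \<open>3 * Q = _\<close> \<open>(r z)^2 < k2^2\<close> rz(2) k_cond by linarith
    qed
    have "G' z = ((1 + D z)^2 - (2 * D z * (1 + D z) - 2 * h z * D' z)) / (1 + D z)^2"
      unfolding G'_def using dp by (simp add: field_simps)
    also have "(1 + D z)^2 - (2 * D z * (1 + D z) - 2 * h z * D' z) = a^2 * Q"
      unfolding Q_def a_def D'_def D_def by (simp add: power2_eq_square algebra_simps)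
    finally show ?thesis using Qpos by simp
  qed
  have Gcont: "isCont G z" if "z \<in> J" for z using GD[OF that] DERIV_isCont by blast
  have Gmono: "G x \<le> G y" if "x \<in> J" "y \<in> J" "x \<le> y" for x y
  proof (rule DERIV_nonneg_imp_increasing_open[OF \<open>x \<le> y\<close>])
    fix t assume "x < t" "t < y"
    hence "t \<in> J" using that unfolding J_def by auto
    thus "\<exists>d. (G has_real_derivative d) (at t) \<and> d \<ge> 0" using GD G'nn by blast
  next
    have "{x..y} \<subseteq> J" using that unfolding J_def by auto
    thus "continuous_on {x..y} G" using Gcont by (meson continuous_at_imp_continuous_on subsetD)
  qed
  have hmono: "h x \<le> h y" if "x \<in> J" "y \<in> J" "x \<le> y" for x y
  proof (rule DERIV_nonneg_imp_increasing_open[OF \<open>x \<le> y\<close>])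
    fix t assume "x < t" "t < y"
    hence "t \<in> J" using that unfolding J_def by auto
    thus "\<exists>d. (h has_real_derivative d) (at t) \<and> d \<ge> 0" using hD Dpos less_imp_le by blast
  next
    have "{x..y} \<subseteq> J" using that unfolding J_def by auto
    thus "continuous_on {x..y} h" using hD DERIV_isCont by (meson continuous_at_imp_continuous_on subsetD)
  qed
  have zsJ: "zs \<in> J" using zs_in J_def by simp
  have Gzs: "G zs = zs" unfolding G_eq using h_zs by simp
  have Gfix: "z = zs" if "z \<in> J" "G z = z" for z
  proof -
    have "1 + D z > 0" using Dpos[OF that(1)] by simp
    hence "h z = 0" using that(2) unfolding G_eq by simp
    thus ?thesis using zs_unique that(1) unfolding J_def by auto
  qed
  have right: "zs \<le> G z \<and> G z \<le> z" if "z \<in> J" "zs \<le> z" for z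
  proof
    show "zs \<le> G z" using Gmono[OF zsJ that] Gzs by simp
    have "h z \<ge> 0" using hmono[OF zsJ that] h_zs by simp
    moreover have "1 + D z > 0" using Dpos[OF that(1)] by simp
    ultimately show "G z \<le> z" unfolding G_eq by simp
  qed
  have left: "G z \<le> zs \<and> z \<le> G z" if "z \<in> J" "z \<le> zs" for z
  proof
    show "G z \<le> zs" using Gmono[OF that(1) zsJ that(2)] Gzs by simp
    have "h z \<le> 0" using hmono[OF that(1) zsJ that(2)] h_zs by simp
    moreover have "1 + D z > 0" using Dpos[OF that(1)] by simp
    ultimately show "z \<le> G z" unfolding G_eq by (simp add: divide_nonpos_pos)
  qed
  have denom: "2 + (h z)^2 - 2 * r z * h z \<noteq> 0" if "z \<in> J" for z
    using Dpos[OF that] unfolding D_def by simp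
  show ?thesis
  proof (intro ballI)
    fix z0 assume z0: "z0 \<in> {zw<..<zw'}"
    hence z0J: "z0 \<in> J" unfolding J_def .
    define x where "x = (\<lambda>n. (G ^^ n) z0)"
    have xS: "x (Suc n) = G (x n)" for n unfolding x_def by simp
    show "(\<forall>n. (G ^^ n) z0 \<in> {zw<..<zw'} \<and>
                 2 + (h ((G ^^ n) z0))^2 - 2 * r ((G ^^ n) z0) * h ((G ^^ n) z0) \<noteq> 0)
         \<and> (mono (\<lambda>n. (G ^^ n) z0) \<or> antimono (\<lambda>n. (G ^^ n) z0))
         \<and> (\<lambda>n. (G ^^ n) z0) \<longlonglongrightarrow> zs"
    proof (cases "zs \<le> z0")
      case True
      have bnd: "zs \<le> x n \<and> x n \<le> z0" for n
      proof (induction n)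
        case 0 then show ?case using True by (simp add: x_def)
      next
        case (Suc n)
        have "x n \<in> J" using Suc zsJ z0J unfolding J_def by auto
        then show ?case using right[of "x n"] Suc xS by force
      qed
      have inJ: "x n \<in> J" for n using bnd[of n] zsJ z0J unfolding J_def by auto
      have dec: "decseq x" 
        by (rule decseq_SucI) (use right inJ bnd xS in auto)
      obtain L where L: "x \<longlonglongrightarrow> L" "\<forall>i. L \<le> x i"
        using decseq_convergent[OF dec, of zs] bnd by blast
      have "zs \<le> L" using L(1) bnd by (meson LIMSEQ_le_const)
      moreover have "L \<le> z0" using L(2)[rule_format, of 0] by (simp add: x_def)
      ultimately have LJ: "L \<in> J" using zsJ z0J unfolding J_def by auto
      have "(\<lambda>n. G (x n)) \<longlonglongrightarrow> G L" using isCont_tendsto_compose[OF Gcont[OF LJ] L(1)] .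
      moreover have "(\<lambda>n. G (x n)) \<longlonglongrightarrow> L" using L(1) unfolding xS[symmetric] by (rule LIMSEQ_Suc)
      ultimately have "G L = L" using LIMSEQ_unique by blast
      hence "L = zs" using Gfix LJ by blast
      hence "(\<forall>n. x n \<in> J \<and> 2 + (h (x n))^2 - 2 * r (x n) * h (x n) \<noteq> 0) \<and> (mono x \<or> antimono x) \<and> x \<longlonglongrightarrow> zs"
        using L(1) inJ denom dec by blast
      then show ?thesis unfolding x_def J_def .
    next
      case False
      have bnd: "x n \<le> zs \<and> z0 \<le> x n" for n
      proof (induction n)
        case 0 then show ?case using False by (simp add: x_def)
      next
        case (Suc n)
        have "x n \<in> J" using Suc zsJ z0J unfolding J_def by auto
        then show ?case using left[of "x n"] Suc xS by force
      qed
      have inJ: "x n \<in> J" for n using bnd[of n] zsJ z0J unfolding J_def by auto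
      have inc: "incseq x" 
        by (rule incseq_SucI) (use left inJ bnd xS in auto)
      obtain L where L: "x \<longlonglongrightarrow> L" "\<forall>i. x i \<le> L"
        using incseq_convergent[OF inc, of zs] bnd by blast
      have "L \<le> zs" using L(1) bnd by (meson LIMSEQ_le_const2)
      moreover have "z0 \<le> L" using L(2)[rule_format, of 0] by (simp add: x_def)
      ultimately have LJ: "L \<in> J" using zsJ z0J unfolding J_def by auto
      have "(\<lambda>n. G (x n)) \<longlonglongrightarrow> G L" using isCont_tendsto_compose[OF Gcont[OF LJ] L(1)] .
      moreover have "(\<lambda>n. G (x n)) \<longlonglongrightarrow> L" using L(1) unfolding xS[symmetric] by (rule LIMSEQ_Suc)
      ultimately have "G L = L" using LIMSEQ_unique by blast
      hence "L = zs" using Gfix LJ by blast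
      hence "(\<forall>n. x n \<in> J \<and> 2 + (h (x n))^2 - 2 * r (x n) * h (x n) \<noteq> 0) \<and> (mono x \<or> antimono x) \<and> x \<longlonglongrightarrow> zs"
        using L(1) inJ denom inc by blast
      then show ?thesis unfolding x_def J_def .
    qed
  qed
qed

end
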